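(* Let $(A_k,b_k,c_k)_{k\in\mathbb{Z}}$ and $(\tilde A_k,\tilde b_k,\tilde c_k)_{k\in\mathbb{Z}}$ (with $A_k,\tilde A_k\in\mathbb{R}^{n\times n}$, $b_k,\tilde b_k\in\mathbb{R}^{n\times1}$, $c_k,\tilde c_k\in\mathbb{R}^{1\times n}$) be algebraically equivalent via invertible matrices $\{T_k\}_{k\in\mathbb{Z}}$, i.e. $\tilde A_k=T_{k+1}A_kT_k^{-1}$, $\tilde b_k=T_{k+1}b_k$, $\tilde c_k=c_kT_k^{-1}$. Then for every $k\in\mathbb{Z}$, $\det(T_k)\,\tilde c_k\operatorname{adj}(\tilde A_k)\tilde b_k=\det(T_{k+1})\,c_k\operatorname{adj}(A_k)b_k$.
   Context: $\operatorname{adj}(A)$ denotes the adjugate of $A$ (the matrix with $A\operatorname{adj}(A)=\operatorname{adj}(A)A=\det(A)I$, whose $(j,i)$ entry is $(-1)^{i+j}$ times the $(i,j)$ minor). *)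

theory Defs
  imports "Jordan_Normal_Form.Determinant"
begin

end

theory Submission
  imports Defs
begin

lemma adj_col: assumes A: "A \<in> carrier_mat n n" and b: "b \<in> carrier_vec n" and k: "k < n"
  shows "row (adj_mat A) k \<bullet> b = det (replace_col A b k)"
proof -
  let ?Ab = "replace_col A b k"
  have Ab: "?Ab \<in> carrier_mat n n" using A by (auto simp: replace_col_def)
  show ?thesis unfolding scalar_prod_def using b k A
    by (subst laplace_expansion_column[OF Ab k], auto intro!: sum.cong arg_cong[of _ _ det]
      arg_cong[of _ _ "\<lambda> x. _ * x"] eq_matI
      simp: replace_col_def adj_mat_def Matrix.row_def cofactor_def mat_delete_def ac_simps)
qed

lemma replace_col_mult: assumes P: "P \<in> carrier_mat n n" and M: "M \<in> carrier_mat n n"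
  and b: "b \<in> carrier_vec n" and k: "k < n"
  shows "replace_col (P * M) (P *\<^sub>v b) k = P * replace_col M b k"
proof -
  have R: "replace_col M b k \<in> carrier_mat n n" using M by (auto simp: replace_col_def)
  have "col (replace_col M b k) j = (if j = k then b else col M j)" if "j < n" for j
    using that M b by (auto simp: replace_col_def)
  then show ?thesis using P M R b k
    by (intro eq_matI) (auto simp: replace_col_def)
qed

lemma left_inv:
  fixes P M :: "'a::comm_ring_1 mat"
  assumes P: "P \<in> carrier_mat n n" and M: "M \<in> carrier_mat n n"
  and b: "b \<in> carrier_mat n 1" and c: "c \<in> carrier_mat 1 n"
  shows "(c * adj_mat (P * M) * (P * b)) $$ (0,0) = det P * (c * adj_mat M * b) $$ (0,0)"
proof -
  have PM: "P * M \<in> carrier_mat n n" using P M by auto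
  have e: "(adj_mat X * B) $$ (k,0) = det (replace_col X (col B 0) k)"
    if "X \<in> carrier_mat n n" "B \<in> carrier_mat n 1" "k < n" for X B k
    using that adj_col[of X n "col B 0" k] adj_mat(1)[of X n] by auto
  have "(c * adj_mat (P * M) * (P * b)) = c * (adj_mat (P * M) * (P * b))"
    using adj_mat(1)[OF PM] P b c by (metis assoc_mult_mat mult_carrier_mat)
  moreover have "(c * adj_mat M * b) = c * (adj_mat M * b)"
    using adj_mat(1)[OF M] b c by (metis assoc_mult_mat)
  moreover have "(adj_mat (P * M) * (P * b)) $$ (k,0) = det P * (adj_mat M * b) $$ (k,0)"
    if k: "k < n" for k
  proof -
    have "(adj_mat (P * M) * (P * b)) $$ (k,0) = det (replace_col (P*M) (col (P*b) 0) k)"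
      using e[OF PM _ k, of "P*b"] P b by auto
    also have "col (P*b) 0 = P *\<^sub>v col b 0" using P b by auto
    also have "det (replace_col (P*M) (P *\<^sub>v col b 0) k) = det (P * replace_col M (col b 0) k)"
      using replace_col_mult[OF P M _ k, of "col b 0"] b by auto
    also have "\<dots> = det P * det (replace_col M (col b 0) k)"
      by (rule det_mult[OF P], insert M, auto simp: replace_col_def)
    also have "det (replace_col M (col b 0) k) = (adj_mat M * b) $$ (k,0)"
      using e[OF M b k] by simp
    finally show ?thesis .
  qed
  ultimately show ?thesis using c b P M adj_mat(1)[OF PM] adj_mat(1)[OF M]
    by (simp add: scalar_prod_def sum_distrib_left ac_simps)
qed

lemma adj_transpose: assumes A: "A \<in> carrier_mat n n"
  shows "adj_mat (transpose_mat A) = transpose_mat (adj_mat A)"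
proof -
  have "mat_delete (transpose_mat A) i j = transpose_mat (mat_delete A j i)" if "i < n" "j < n" for i j
    using A that by (intro eq_matI) (auto simp: mat_delete_def)
  moreover have cm: "mat_delete A j i \<in> carrier_mat (n-1) (n-1)" for i j
    using A by (auto simp: mat_delete_def)
  moreover have "det (transpose_mat (mat_delete A j i)) = det (mat_delete A j i)" for i j
    using det_transpose[OF cm] .
  ultimately show ?thesis using A
    by (intro eq_matI) (auto simp: adj_mat_def cofactor_def add.commute)
qed

lemma right_inv:
  fixes Q M :: "'a::comm_ring_1 mat"
  assumes Q: "Q \<in> carrier_mat n n" and M: "M \<in> carrier_mat n n"
  and b: "b \<in> carrier_mat n 1" and c: "c \<in> carrier_mat 1 n"
  shows "((c * Q) * adj_mat (M * Q) * b) $$ (0,0) = det Q * (c * adj_mat M * b) $$ (0,0)"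
proof -
  have MQ: "M * Q \<in> carrier_mat n n" using M Q by auto
  have aMQ: "adj_mat (M * Q) \<in> carrier_mat n n" using adj_mat(1)[OF MQ] .
  have aM: "adj_mat M \<in> carrier_mat n n" using adj_mat(1)[OF M] .
  have tr: "(X :: 'a mat) $$ (0,0) = transpose_mat X $$ (0,0)" if "X \<in> carrier_mat 1 1" for X
    using that by auto
  have cQ: "c * Q \<in> carrier_mat 1 n" using c Q by auto
  have X1: "(c * Q) * adj_mat (M * Q) \<in> carrier_mat 1 n" using cQ aMQ by auto
  have "transpose_mat ((c * Q) * adj_mat (M * Q) * b)
     = transpose_mat b * transpose_mat ((c * Q) * adj_mat (M * Q))"
    by (rule transpose_mult[OF X1 b])
  also have "transpose_mat ((c * Q) * adj_mat (M * Q)) = transpose_mat (adj_mat (M * Q)) * transpose_mat (c * Q)"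
    by (rule transpose_mult[OF cQ aMQ])
  also have "transpose_mat (adj_mat (M * Q)) = adj_mat (transpose_mat (M * Q))"
    by (rule adj_transpose[OF MQ, symmetric])
  also have "transpose_mat (M * Q) = transpose_mat Q * transpose_mat M"
    by (rule transpose_mult[OF M Q])
  also have "transpose_mat (c * Q) = transpose_mat Q * transpose_mat c"
    by (rule transpose_mult[OF c Q])
  finally have e0: "transpose_mat ((c * Q) * adj_mat (M * Q) * b) =
     transpose_mat b * (adj_mat (transpose_mat Q * transpose_mat M) * (transpose_mat Q * transpose_mat c))" .
  have e1: "transpose_mat ((c * Q) * adj_mat (M * Q) * b) =
     transpose_mat b * adj_mat (transpose_mat Q * transpose_mat M) * (transpose_mat Q * transpose_mat c)"
  proof -
    have "transpose_mat Q * transpose_mat M \<in> carrier_mat n n" using Q M by auto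
    note a = adj_mat(1)[OF this]
    have "transpose_mat b * adj_mat (transpose_mat Q * transpose_mat M) * (transpose_mat Q * transpose_mat c)
       = transpose_mat b * (adj_mat (transpose_mat Q * transpose_mat M) * (transpose_mat Q * transpose_mat c))"
      by (rule assoc_mult_mat[OF _ a], insert b Q c, auto)
    with e0 show ?thesis by simp
  qed
  have X2: "c * adj_mat M \<in> carrier_mat 1 n" using c aM by auto
  have "transpose_mat (c * adj_mat M * b) = transpose_mat b * transpose_mat (c * adj_mat M)"
    by (rule transpose_mult[OF X2 b])
  also have "transpose_mat (c * adj_mat M) = transpose_mat (adj_mat M) * transpose_mat c"
    by (rule transpose_mult[OF c aM])
  also have "transpose_mat (adj_mat M) = adj_mat (transpose_mat M)"
    by (rule adj_transpose[OF M, symmetric])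
  finally have e20: "transpose_mat (c * adj_mat M * b) = transpose_mat b * (adj_mat (transpose_mat M) * transpose_mat c)" .
  have "transpose_mat b * adj_mat (transpose_mat M) * transpose_mat c = transpose_mat b * (adj_mat (transpose_mat M) * transpose_mat c)"
    by (rule assoc_mult_mat[OF _ adj_mat(1)], insert b M c, auto)
  with e20 have e2: "transpose_mat (c * adj_mat M * b) = transpose_mat b * adj_mat (transpose_mat M) * transpose_mat c" by simp
  have "((c * Q) * adj_mat (M * Q) * b) $$ (0,0) = transpose_mat ((c * Q) * adj_mat (M * Q) * b) $$ (0,0)"
    by (rule tr, insert X1 b, auto)
  also have "\<dots> = det (transpose_mat Q) * (transpose_mat b * adj_mat (transpose_mat M) * transpose_mat c) $$ (0,0)"
    unfolding e1
    by (rule left_inv, insert Q M b c, auto)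
  also have "det (transpose_mat Q) = det Q" by (rule det_transpose[OF Q])
  also have "(transpose_mat b * adj_mat (transpose_mat M) * transpose_mat c) $$ (0,0) = (c * adj_mat M * b) $$ (0,0)"
    unfolding e2[symmetric] by (rule tr[symmetric], insert X2 b, auto)
  finally show ?thesis .
qed

theorem claim10:
  fixes n :: nat
    and A At T Tinv :: "int \<Rightarrow> real mat"
    and b bt c ct :: "int \<Rightarrow> real mat"
  assumes A_dim: "\<And>k. A k \<in> carrier_mat n n"
    and b_dim: "\<And>k. b k \<in> carrier_mat n 1"
    and c_dim: "\<And>k. c k \<in> carrier_mat 1 n"
    and T_dim: "\<And>k. T k \<in> carrier_mat n n"
    and Tinv_dim: "\<And>k. Tinv k \<in> carrier_mat n n"
    and T_inv1: "\<And>k. T k * Tinv k = 1\<^sub>m n"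
    and T_inv2: "\<And>k. Tinv k * T k = 1\<^sub>m n"
    and At_def: "\<And>k. At k = T (k + 1) * A k * Tinv k"
    and bt_def: "\<And>k. bt k = T (k + 1) * b k"
    and ct_def: "\<And>k. ct k = c k * Tinv k"
  shows "\<forall>k. det (T k) \<cdot>\<^sub>m (ct k * adj_mat (At k) * bt k)
            = det (T (k + 1)) \<cdot>\<^sub>m (c k * adj_mat (A k) * b k)"
proof
  fix k
  let ?T' = "T (k+1)" and ?Ti = "Tinv k"
  have A: "A k \<in> carrier_mat n n" and b: "b k \<in> carrier_mat n 1" and c: "c k \<in> carrier_mat 1 n"
    and T': "?T' \<in> carrier_mat n n" and Ti: "?Ti \<in> carrier_mat n n" and T: "T k \<in> carrier_mat n n"
    using assms by auto
  have AT: "A k * ?Ti \<in> carrier_mat n n" using A Ti by auto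
  have cT: "c k * ?Ti \<in> carrier_mat 1 n" using c Ti by auto
  have At: "At k = ?T' * (A k * ?Ti)" using At_def A Ti T' by auto
  have dd: "det (T k) * det ?Ti = 1"
    using det_mult[OF T Ti] T_inv1[of k] by simp
  have "(ct k * adj_mat (At k) * bt k) $$ (0,0)
      = ((c k * ?Ti) * adj_mat (?T' * (A k * ?Ti)) * (?T' * b k)) $$ (0,0)"
    using At ct_def bt_def by simp
  also have "\<dots> = det ?T' * ((c k * ?Ti) * adj_mat (A k * ?Ti) * b k) $$ (0,0)"
    by (rule left_inv[OF T' AT b cT])
  also have "((c k * ?Ti) * adj_mat (A k * ?Ti) * b k) $$ (0,0) = det ?Ti * (c k * adj_mat (A k) * b k) $$ (0,0)"
    by (rule right_inv[OF Ti A b c])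
  finally have e: "(ct k * adj_mat (At k) * bt k) $$ (0,0) = det ?T' * det ?Ti * (c k * adj_mat (A k) * b k) $$ (0,0)"
    by simp
  have d1: "ct k * adj_mat (At k) * bt k \<in> carrier_mat 1 1"
  proof -
    have "At k \<in> carrier_mat n n" using At T' AT by auto
    note a = adj_mat(1)[OF this]
    have "ct k \<in> carrier_mat 1 n" "bt k \<in> carrier_mat n 1" using ct_def bt_def cT T' b by auto
    then show ?thesis using a by (intro mult_carrier_mat)
  qed
  have d2: "c k * adj_mat (A k) * b k \<in> carrier_mat 1 1"
    using c adj_mat(1)[OF A] b by auto
  show "det (T k) \<cdot>\<^sub>m (ct k * adj_mat (At k) * bt k)
            = det (T (k + 1)) \<cdot>\<^sub>m (c k * adj_mat (A k) * b k)"
  proof (rule eq_matI)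
    fix i j assume "i < dim_row (det (T (k + 1)) \<cdot>\<^sub>m (c k * adj_mat (A k) * b k))"
      "j < dim_col (det (T (k + 1)) \<cdot>\<^sub>m (c k * adj_mat (A k) * b k))"
    then have "i = 0" "j = 0" using d2 by auto
    then show "(det (T k) \<cdot>\<^sub>m (ct k * adj_mat (At k) * bt k)) $$ (i, j) =
         (det (T (k + 1)) \<cdot>\<^sub>m (c k * adj_mat (A k) * b k)) $$ (i, j)"
    proof -
      have "det (T k) * (det ?T' * det ?Ti * (c k * adj_mat (A k) * b k) $$ (0,0))
          = det ?T' * (c k * adj_mat (A k) * b k) $$ (0,0) * (det (T k) * det ?Ti)"
        by (simp only: ac_simps)
      moreover have sm: "(x \<cdot>\<^sub>m X) $$ (0,0) = x * X $$ (0,0)" if "X \<in> carrier_mat 1 1" for x and X :: "real mat"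
        using that by auto
      ultimately show ?thesis unfolding \<open>i = 0\<close> \<open>j = 0\<close> sm[OF d1] sm[OF d2] e dd by simp
    qed
  qed (use d1 d2 cT c b T' ct_def bt_def in auto)
qed

end
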